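(* Let $T>0$, $M$ and $N$ be positive integers, $\tau=T/M$, $t_k=k\tau$ ($k=0,\dots,M$), $h=1/N$ and $x_r=rh$ ($r=0,\dots,N$). Let $u:\Omega=[0,1]\times[0,T]\to\mathbb{R}$ be such that $\partial_x^3 u$ is continuous on $\Omega$, and write $u_{k}(x)=u(x,t_{k})$. Let $0<\gamma<1$ and $0\le k\le M-1$. For an integer $m\ge 1$ and $\eta>0$ put $c^{\eta}_m=\frac{(m-1)^{\eta}-m^{\eta}}{\eta}$, and set $\nu_h^{\gamma}=\frac{h^{1-\gamma}}{\Gamma(1-\gamma)}$. For $1\le r\le N-1$ define the weights $w^{\gamma}_{j,r}$, $j=0,\dots,r$, by \[ w^{\gamma}_{j,r}=\tilde w^{\gamma}_{j-1,0}-\tilde w^{\gamma}_{j,1}, \] where $\tilde w^{\gamma}_{-1,0}=0$, $\tilde w^{\gamma}_{r,1}=0$, and for $\rho\in\{0,1\}$ and $m=1,\dots,r$, \[ \tilde w^{\gamma}_{r-m,\rho}=c^{2-\gamma}_{m}-(m-\rho)\,c^{1-\gamma}_{m}. \] Then for $r=1,\dots,N-1$, \[ D_x^{\gamma}u_{k+1}(x_r)=\nu_h^{\gamma}\sum_{j=0}^{r}w^{\gamma}_{j,r}\,u_{k+1}'(x_j)+R_h^{\gamma}(r), \] where the remainder satisfies \[ \|R_h^{\gamma}\|_{\infty}\le\frac{h^{2}\bar{\mathcal{M}}_u}{8\,\Gamma(2-\gamma)},\qquad \bar{\mathcal{M}}_u=\sup_{(x,t)\in\Omega}\Big|\frac{\partial^3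 u}{\partial x^3}(x,t)\Big|. \]
   Context: For $0<\gamma<1$, the Caputo derivative in $x$ is $D_x^{\gamma}f(x)=\frac{1}{\Gamma(1-\gamma)}\int_0^{x}(x-s)^{-\gamma}f'(s)\,ds$ for $x>0$. Here $u_{k+1}'$ denotes the first derivative of $x\mapsto u(x,t_{k+1})$, and $\|R_h^\gamma\|_\infty$ denotes the maximum of $|R_h^\gamma(r)|$ over $r=1,\dots,N-1$. *)

theory Defs
  imports "HOL-Analysis.Analysis"
begin

text \<open>Caputo derivative of order gamma at x > 0 of a function whose first
  derivative is the function df:
  D^gamma f(x) = 1/Gamma(1-gamma) * integral_0^x (x-s)^(-gamma) f'(s) ds.\<close>
definition caputo :: "real \<Rightarrow> (real \<Rightarrow> real) \<Rightarrow> real \<Rightarrow> real" where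
  "caputo \<gamma> df x = 1 / Gamma (1 - \<gamma>) * integral {0..x} (\<lambda>s. (x - s) powr (- \<gamma>) * df s)"

definition cc :: "real \<Rightarrow> nat \<Rightarrow> real" where
  "cc \<eta> m = ((real m - 1) powr \<eta> - (real m) powr \<eta>) / \<eta>"

text \<open>tilde w^gamma_{i,rho} for i = r - m, m = 1..r (i.e. i = 0..r-1):
  c^{2-gamma}_m - (m - rho) c^{1-gamma}_m\<close>
definition wt :: "real \<Rightarrow> nat \<Rightarrow> nat \<Rightarrow> nat \<Rightarrow> real" where
  "wt \<gamma> r \<rho> i = cc (2 - \<gamma>) (r - i) - (real (r - i) - real \<rho>) * cc (1 - \<gamma>) (r - i)"

definition ww :: "real \<Rightarrow> nat \<Rightarrow> nat \<Rightarrow> real" where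
  "ww \<gamma> j r = (if j = 0 then 0 else wt \<gamma> r 0 (j - 1)) - (if j = r then 0 else wt \<gamma> r 1 j)"

end

theory Submission
  imports Defs
begin


lemma conv_aux:
  fixes p dq ddq :: "real \<Rightarrow> real"
  assumes ab: "a \<le> b" and pa: "p a = 0" and pb: "p b = 0"
    and d1: "\<And>y. y \<in> {a..b} \<Longrightarrow> (p has_real_derivative dq y) (at y within {a..b})"
    and d2: "\<And>y. y \<in> {a..b} \<Longrightarrow> (dq has_real_derivative ddq y) (at y within {a..b})"
    and nn: "\<And>y. y \<in> {a..b} \<Longrightarrow> ddq y \<ge> 0"
    and s: "s \<in> {a..b}"
  shows "p s \<le> 0"
proof (rule ccontr)
  assume "\<not> p s \<le> 0"
  hence ps: "p s > 0" by simp
  have "a < s" using ps pa s by (cases "a = s") auto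
  have "s < b" using ps pb s by (cases "b = s") auto
  have "\<exists>x\<in>{a..s}. p s - p a = dq x * (s - a)"
  proof (rule mvt_very_simple[where f=p and f'="\<lambda>x d. dq x * d"])
    show "a \<le> s" using s by simp
    fix x assume "a \<le> x" "x \<le> s"
    hence "(p has_real_derivative dq x) (at x within {a..s})"
      using d1[of x] s by (auto intro: has_field_derivative_subset)
    thus "(p has_derivative (\<lambda>d. dq x * d)) (at x within {a..s})"
      by (simp add: has_field_derivative_def)
  qed
  then obtain x1 where x1: "x1 \<in> {a..s}" "p s - p a = dq x1 * (s - a)" by blast
  have "\<exists>x\<in>{s..b}. p b - p s = dq x * (b - s)"
  proof (rule mvt_very_simple[where f=p and f'="\<lambda>x d. dq x * d"])
    show "s \<le> b" using s by simp
    fix x assume "s \<le> x" "x \<le> b"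
    hence "(p has_real_derivative dq x) (at x within {s..b})"
      using d1[of x] s by (auto intro: has_field_derivative_subset)
    thus "(p has_derivative (\<lambda>d. dq x * d)) (at x within {s..b})"
      by (simp add: has_field_derivative_def)
  qed
  then obtain x2 where x2: "x2 \<in> {s..b}" "p b - p s = dq x2 * (b - s)" by blast
  have q1: "dq x1 > 0" using x1 ps pa \<open>a < s\<close> by (metis diff_gt_0_iff_gt diff_zero zero_less_mult_pos2)
  have "dq x2 * (b - s) < 0" using x2 ps pb by simp
  hence q2: "dq x2 < 0" using \<open>s < b\<close> by (simp add: mult_less_0_iff)
  have "x1 \<le> x2" using x1 x2 by auto
  have "\<exists>x\<in>{x1..x2}. dq x2 - dq x1 = ddq x * (x2 - x1)"
  proof (rule mvt_very_simple[where f=dq and f'="\<lambda>x d. ddq x * d"])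
    show "x1 \<le> x2" by fact
    fix x assume "x1 \<le> x" "x \<le> x2"
    moreover have "{x1..x2} \<subseteq> {a..b}" using x1 x2 by auto
    ultimately have "(dq has_real_derivative ddq x) (at x within {x1..x2})"
      using d2[of x] by (auto intro: has_field_derivative_subset)
    thus "(dq has_derivative (\<lambda>d. ddq x * d)) (at x within {x1..x2})"
      by (simp add: has_field_derivative_def)
  qed
  then obtain y where y: "y \<in> {x1..x2}" "dq x2 - dq x1 = ddq y * (x2 - x1)" by blast
  have "ddq y \<ge> 0" using nn y x1 x2 by auto
  hence "ddq y * (x2 - x1) \<ge> 0" using \<open>x1 \<le> x2\<close> by simp
  thus False using y q1 q2 by linarith
qed



lemma interp_side:
  fixes f f1 f2 :: "real \<Rightarrow> real"
  assumes ab: "a < b" and sg: "\<bar>\<sigma>\<bar> = 1"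
    and d1: "\<And>y. y \<in> {a..b} \<Longrightarrow> (f has_real_derivative f1 y) (at y within {a..b})"
    and d2: "\<And>y. y \<in> {a..b} \<Longrightarrow> (f1 has_real_derivative f2 y) (at y within {a..b})"
    and bd: "\<And>y. y \<in> {a..b} \<Longrightarrow> \<bar>f2 y\<bar> \<le> K"
    and s: "s \<in> {a..b}"
  shows "\<sigma> * (f s - (f a * (b - s) + f b * (s - a)) / (b - a)) \<le> K * (s - a) * (b - s) / 2"
proof -
  define p where "p = (\<lambda>y. \<sigma> * (f y - (f a * (b - y) + f b * (y - a)) / (b - a)) - K * (y - a) * (b - y) / 2)"
  define p1 where "p1 y = \<sigma> * (f1 y - (f b - f a) / (b - a)) - K * (a + b - 2 * y) / 2" for y
  define p2 where "p2 y = \<sigma> * f2 y + K" for y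
  have "p s \<le> 0"
  proof (rule conv_aux[where p=p and dq=p1 and ddq=p2])
    show "a \<le> b" using ab by simp
    show "p a = 0" "p b = 0" using ab by (simp_all add: p_def)
    show "s \<in> {a..b}" by fact
    fix y assume y: "y \<in> {a..b}"
    have dL: "((\<lambda>z. (f a * (b - z) + f b * (z - a)) / (b - a)) has_real_derivative (f b - f a) / (b - a)) (at y within {a..b})"
    proof -
      have "(\<lambda>z. (f a * (b - z) + f b * (z - a)) / (b - a)) = (\<lambda>z. (f a * b - f b * a) / (b - a) + z * ((f b - f a) / (b - a)))"
      proof
        fix z
        have ba: "b - a \<noteq> 0" using ab by simp
        show "(f a * (b - z) + f b * (z - a)) / (b - a) = (f a * b - f b * a) / (b - a) + z * ((f b - f a) / (b - a))"
          using ba by (simp add: divide_simps) (simp add: algebra_simps)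
      qed
      moreover have "((\<lambda>z. (f a * b - f b * a) / (b - a) + z * ((f b - f a) / (b - a))) has_real_derivative (f b - f a) / (b - a)) (at y within {a..b})"
        using ab by (auto intro!: derivative_eq_intros)
      ultimately show ?thesis by simp
    qed
    have dQ: "((\<lambda>z. K * (z - a) * (b - z) / 2) has_real_derivative K * (a + b - 2 * y) / 2) (at y within {a..b})"
      by (auto intro!: derivative_eq_intros simp: field_simps)
    have "((\<lambda>z. \<sigma> * (f z - (f a * (b - z) + f b * (z - a)) / (b - a)) - K * (z - a) * (b - z) / 2)
       has_real_derivative \<sigma> * (f1 y - (f b - f a) / (b - a)) - K * (a + b - 2 * y) / 2) (at y within {a..b})"
      by (rule DERIV_diff[OF DERIV_cmult[OF DERIV_diff[OF d1[OF y] dL]] dQ])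
    thus "(p has_real_derivative p1 y) (at y within {a..b})"
      unfolding p_def p1_def by simp
    show "(p1 has_real_derivative p2 y) (at y within {a..b})"
    proof -
      have "((\<lambda>z. \<sigma> * (f1 z - (f b - f a) / (b - a)) - (K * (a + b) / 2 - z * K))
        has_real_derivative \<sigma> * (f2 y - 0) - (0 - 1 * K)) (at y within {a..b})"
        by (intro DERIV_diff DERIV_cmult d2[OF y] DERIV_const DERIV_cmult_right DERIV_ident)
      moreover have "(\<lambda>z. \<sigma> * (f1 z - (f b - f a) / (b - a)) - (K * (a + b) / 2 - z * K)) = p1"
        by (rule ext) (simp add: p1_def field_simps)
      ultimately show ?thesis unfolding p2_def by simp
    qed
    have "\<bar>\<sigma> * f2 y\<bar> \<le> K" using bd[OF y] sg by (simp add: abs_mult)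
    thus "0 \<le> p2 y" unfolding p2_def by linarith
  qed
  thus ?thesis unfolding p_def by simp
qed

lemma interp_err:
  fixes f f1 f2 :: "real \<Rightarrow> real"
  assumes ab: "a < b"
    and d1: "\<And>y. y \<in> {a..b} \<Longrightarrow> (f has_real_derivative f1 y) (at y within {a..b})"
    and d2: "\<And>y. y \<in> {a..b} \<Longrightarrow> (f1 has_real_derivative f2 y) (at y within {a..b})"
    and bd: "\<And>y. y \<in> {a..b} \<Longrightarrow> \<bar>f2 y\<bar> \<le> K"
    and s: "s \<in> {a..b}"
  shows "\<bar>f s - (f a * (b - s) + f b * (s - a)) / (b - a)\<bar> \<le> K * (b - a)^2 / 8"
proof -
  define g where "g = f s - (f a * (b - s) + f b * (s - a)) / (b - a)"
  have 1: "1 * g \<le> K * (s - a) * (b - s) / 2"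
    unfolding g_def by (rule interp_side[OF ab _ d1 d2 bd s]) auto
  have 2: "(-1) * g \<le> K * (s - a) * (b - s) / 2"
    unfolding g_def by (rule interp_side[OF ab _ d1 d2 bd s]) auto
  have K: "K \<ge> 0" using bd[of a] ab by auto
  have "(b - a)^2 - 4 * ((s - a) * (b - s)) = (a + b - 2 * s)^2"
    by (simp add: power2_eq_square algebra_simps)
  hence "4 * ((s - a) * (b - s)) \<le> (b - a)^2" by (smt (verit) zero_le_power2)
  hence "K * (4 * ((s - a) * (b - s))) \<le> K * (b - a)^2" using K by (rule mult_left_mono)
  moreover have "K * (s - a) * (b - s) = K * ((s - a) * (b - s))" by simp
  ultimately have "\<bar>g\<bar> \<le> K * (b - a)^2 / 8" using 1 2 by linarith
  thus ?thesis unfolding g_def .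
qed



lemma kern_int:
  fixes X a b e :: real
  assumes e: "e > 0" and ab: "a \<le> b" and bX: "b \<le> X"
  shows "((\<lambda>s. (X - s) powr (e - 1)) has_integral ((X - a) powr e - (X - b) powr e) / e) {a..b}"
proof -
  define F where "F = (\<lambda>s. - ((X - s) powr e) / e)"
  have "((\<lambda>s. (X - s) powr (e - 1)) has_integral F b - F a) {a..b}"
  proof (rule fundamental_theorem_of_calculus_interior[OF ab])
    have "continuous_on {a..b} (\<lambda>s. (X - s) powr e)"
    proof (rule continuous_on_powr')
      show "continuous_on {a..b} (\<lambda>s. X - s)" by (intro continuous_intros)
      show "continuous_on {a..b} (\<lambda>s. e)" by (rule continuous_on_const)
      show "\<forall>x\<in>{a..b}. 0 \<le> X - x \<and> (X - x = 0 \<longrightarrow> 0 < e)" using e bX by auto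
    qed
    thus "continuous_on {a..b} F" unfolding F_def
      by (intro continuous_on_divide continuous_on_minus continuous_on_const) (use e in auto)
    fix s assume s: "s \<in> {a<..<b}"
    hence pos: "X - s > 0" using bX by auto
    have "(F has_real_derivative (X - s) powr (e - 1)) (at s)"
      unfolding F_def using pos e by (auto intro!: derivative_eq_intros)
    thus "(F has_vector_derivative (X - s) powr (e - 1)) (at s)"
      by (simp add: has_real_derivative_iff_has_vector_derivative)
  qed
  moreover have "F b - F a = ((X - a) powr e - (X - b) powr e) / e"
    unfolding F_def by (simp add: diff_divide_distrib)
  ultimately show ?thesis by simp
qed

lemma powr_shift1: "(x::real) \<ge> 0 \<Longrightarrow> x powr (1 - g) = x powr (- g) * x"
proof -
  assume x: "x \<ge> 0"
  have "x powr (1 - g) = x powr (- g + 1)" by simp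
  also have "\<dots> = x powr (- g) * x powr 1" by (rule powr_add)
  also have "\<dots> = x powr (- g) * x" using x by simp
  finally show ?thesis .
qed

lemma interval_piece:
  fixes f f1 f2 :: "real \<Rightarrow> real" and \<gamma> a b X K :: real
  assumes g0: "0 < \<gamma>" and g1: "\<gamma> < 1" and ab: "a < b" and bX: "b \<le> X"
    and d1: "\<And>y. y \<in> {a..b} \<Longrightarrow> (f has_real_derivative f1 y) (at y within {a..b})"
    and d2: "\<And>y. y \<in> {a..b} \<Longrightarrow> (f1 has_real_derivative f2 y) (at y within {a..b})"
    and bd: "\<And>y. y \<in> {a..b} \<Longrightarrow> \<bar>f2 y\<bar> \<le> K"
  shows "\<exists>E. ((\<lambda>s. (X - s) powr (- \<gamma>) * f s) has_integral
      ((f a - f b) / (b - a) * (((X - a) powr (2 - \<gamma>) - (X - b) powr (2 - \<gamma>)) / (2 - \<gamma>))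
       + (f b * (X - a) - f a * (X - b)) / (b - a) * (((X - a) powr (1 - \<gamma>) - (X - b) powr (1 - \<gamma>)) / (1 - \<gamma>))
       + E)) {a..b}
     \<and> \<bar>E\<bar> \<le> K * (b - a)^2 / 8 * (((X - a) powr (1 - \<gamma>) - (X - b) powr (1 - \<gamma>)) / (1 - \<gamma>))"
proof -
  define P where "P = (\<lambda>s. (f a * (b - s) + f b * (s - a)) / (b - a))"
  define ker where "ker = (\<lambda>s. (X - s) powr (- \<gamma>))"
  define J1 where "J1 = ((X - a) powr (1 - \<gamma>) - (X - b) powr (1 - \<gamma>)) / (1 - \<gamma>)"
  define J2 where "J2 = ((X - a) powr (2 - \<gamma>) - (X - b) powr (2 - \<gamma>)) / (2 - \<gamma>)"
  define c1 where "c1 = (f a - f b) / (b - a)"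
  define c0 where "c0 = (f b * (X - a) - f a * (X - b)) / (b - a)"
  define C where "C = K * (b - a)^2 / 8"
  have k1: "(ker has_integral J1) {a..b}"
    using kern_int[of "1 - \<gamma>" a b X] g1 ab bX unfolding ker_def J1_def by simp
  have k2: "((\<lambda>s. (X - s) powr (1 - \<gamma>)) has_integral J2) {a..b}"
    using kern_int[of "2 - \<gamma>" a b X] g1 ab bX unfolding J2_def by (simp add: algebra_simps)
  have hP0: "((\<lambda>s. (X - s) powr (1 - \<gamma>) * c1 + ker s * c0) has_integral (J2 * c1 + J1 * c0)) {a..b}"
    by (intro has_integral_add has_integral_mult_left k1 k2)
  have hP: "((\<lambda>s. ker s * P s) has_integral (c1 * J2 + c0 * J1)) {a..b}"
  proof (rule has_integral_eq[OF _ hP0[unfolded mult.commute[of J2] mult.commute[of J1]]])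
    fix s assume s: "s \<in> {a..b}"
    have ba: "b - a \<noteq> 0" using ab by simp
    have e1: "P s = c1 * (X - s) + c0"
      unfolding P_def c1_def c0_def using ba by (simp add: divide_simps) (simp add: algebra_simps)
    have e2: "(X - s) powr (1 - \<gamma>) = ker s * (X - s)"
      unfolding ker_def using s bX by (intro powr_shift1) auto
    show "(X - s) powr (1 - \<gamma>) * c1 + ker s * c0 = ker s * P s"
      unfolding e1 e2 by (simp add: algebra_simps)
  qed
  define err where "err = (\<lambda>s. ker s * (f s - P s))"
  have bnd: "norm (err s) \<le> C * ker s" if s: "s \<in> {a..b}" for s
  proof -
    have "\<bar>f s - P s\<bar> \<le> C"
      unfolding P_def C_def by (rule interp_err[OF ab d1 d2 bd s])
    moreover have "ker s \<ge> 0" unfolding ker_def by simp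
    ultimately have "ker s * \<bar>f s - P s\<bar> \<le> ker s * C" by (rule mult_left_mono)
    thus ?thesis unfolding err_def using \<open>ker s \<ge> 0\<close> by (simp add: abs_mult mult.commute)
  qed
  have kC: "((\<lambda>s. C * ker s) has_integral C * J1) {a..b}" by (rule has_integral_mult_right[OF k1])
  have contf: "continuous_on {a..b} f"
    using d1 by (rule DERIV_continuous_on)
  have "err integrable_on {a..b}"
  proof (rule measurable_bounded_by_integrable_imp_integrable)
    have m1: "ker \<in> borel_measurable (lebesgue_on {a..b})"
      using k1 by (intro integrable_imp_measurable) blast
    have "continuous_on {a..b} (\<lambda>s. f s - P s)"
      unfolding P_def by (intro continuous_intros contf) (use ab in auto)
    hence m2: "(\<lambda>s. f s - P s) \<in> borel_measurable (lebesgue_on {a..b})"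
      by (intro continuous_imp_measurable_on_sets_lebesgue) auto
    show "err \<in> borel_measurable (lebesgue_on {a..b})"
      unfolding err_def by (rule borel_measurable_times[OF m1 m2])
    show "(\<lambda>s. C * ker s) integrable_on {a..b}"
      using kC by blast
    show "\<And>x. x \<in> {a..b} \<Longrightarrow> norm (err x) \<le> C * ker x" by (rule bnd)
    show "{a..b} \<in> sets lebesgue" by simp
  qed
  then obtain E where hE: "(err has_integral E) {a..b}" by blast
  have "norm E \<le> integral {a..b} (\<lambda>s. C * ker s)"
    using integral_norm_bound_integral[OF \<open>err integrable_on {a..b}\<close> _ bnd] hE k1
    by (metis has_integral_integrable integral_unique kC)
  also have "\<dots> = C * J1" using kC by (rule integral_unique)
  finally have Eb: "\<bar>E\<bar> \<le> C * J1" by simp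
  have "((\<lambda>s. ker s * P s + err s) has_integral (c1 * J2 + c0 * J1 + E)) {a..b}"
    by (rule has_integral_add[OF hP hE])
  hence "((\<lambda>s. (X - s) powr (- \<gamma>) * f s) has_integral (c1 * J2 + c0 * J1 + E)) {a..b}"
    by (rule has_integral_eq[rotated]) (simp add: err_def ker_def algebra_simps)
  thus ?thesis using Eb unfolding c1_def c0_def J1_def J2_def C_def by blast
qed



lemma has_integral_chain:
  fixes a :: "nat \<Rightarrow> real" and F :: "real \<Rightarrow> real"
  assumes mono: "\<And>i. i < n \<Longrightarrow> a i \<le> a (Suc i)"
    and hi: "\<And>i. i < n \<Longrightarrow> (F has_integral v i) {a i..a (Suc i)}"
  shows "(F has_integral (\<Sum>i<n. v i)) {a 0..a n} \<and> a 0 \<le> a n"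
  using mono hi
proof (induction n)
  case 0
  then show ?case using has_integral_refl(1)[of F "a 0"] by simp
next
  case (Suc n)
  hence IH: "(F has_integral (\<Sum>i<n. v i)) {a 0..a n}" "a 0 \<le> a n" by auto
  have "(F has_integral (\<Sum>i<n. v i) + v n) {a 0..a (Suc n)}"
    using has_integral_combine[OF IH(2) _ IH(1), of "a (Suc n)" "v n"] Suc.prems(1)[of n] Suc.prems(2)[of n] by simp
  thus ?case using IH(2) Suc.prems(1)[of n] by simp
qed

lemma sum_ww:
  "(\<Sum>j = 0..r. ww \<gamma> j r * F j) = (\<Sum>i<r. wt \<gamma> r 0 i * F (Suc i) - wt \<gamma> r 1 i * F i)"
proof (cases r)
  case 0
  then show ?thesis by (simp add: ww_def)
next
  case (Suc q)
  have A: "(\<Sum>j = 0..r. (if j = 0 then 0 else wt \<gamma> r 0 (j - 1)) * F j) = (\<Sum>i<r. wt \<gamma> r 0 i * F (Suc i))"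
    unfolding Suc sum.atLeast0_atMost_Suc_shift by (simp add: atLeast0AtMost lessThan_Suc_atMost)
  have B: "(\<Sum>j = 0..r. (if j = r then 0 else wt \<gamma> r 1 j) * F j) = (\<Sum>i<r. wt \<gamma> r 1 i * F i)"
  proof -
    have "(\<Sum>j = 0..r. (if j = r then 0 else wt \<gamma> r 1 j) * F j) = (\<Sum>j<r. (if j = r then 0 else wt \<gamma> r 1 j) * F j)"
      by (simp add: atLeast0AtMost lessThan_Suc_atMost[symmetric])
    also have "\<dots> = (\<Sum>i<r. wt \<gamma> r 1 i * F i)" by (intro sum.cong) auto
    finally show ?thesis .
  qed
  show ?thesis unfolding ww_def left_diff_distrib sum_subtractf A B ..
qed

lemma piece_value:
  fixes h \<gamma> fa fb :: real and r i :: nat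
  assumes h: "h > 0" and g0: "0 < \<gamma>" and g1: "\<gamma> < 1" and ir: "i < r"
  shows "(fa - fb) / (real (Suc i) * h - real i * h) *
      (((real r * h - real i * h) powr (2 - \<gamma>) - (real r * h - real (Suc i) * h) powr (2 - \<gamma>)) / (2 - \<gamma>))
    + (fb * (real r * h - real i * h) - fa * (real r * h - real (Suc i) * h)) / (real (Suc i) * h - real i * h) *
      (((real r * h - real i * h) powr (1 - \<gamma>) - (real r * h - real (Suc i) * h) powr (1 - \<gamma>)) / (1 - \<gamma>))
    = h powr (1 - \<gamma>) * (fb * wt \<gamma> r 0 i - fa * wt \<gamma> r 1 i)"
proof -
  define m where "m = real (r - i)"
  have m1: "m \<ge> 1" using ir unfolding m_def by simp
  have mr: "real r - real i = m" using ir unfolding m_def by simp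
  have e1: "real r * h - real i * h = m * h" using mr by (simp add: left_diff_distrib[symmetric])
  have e2: "real r * h - real (Suc i) * h = (m - 1) * h" using mr by (simp add: algebra_simps)
  have e3: "real (Suc i) * h - real i * h = h" by (simp add: algebra_simps)
  have p1: "(m * h) powr e = m powr e * h powr e" for e using m1 h by (simp add: powr_mult)
  have p2: "((m - 1) * h) powr e = (m - 1) powr e * h powr e" for e using m1 h by (simp add: powr_mult)
  have p3: "h powr (2 - \<gamma>) = h powr (1 - \<gamma>) * h"
  proof -
    have "h powr (2 - \<gamma>) = h powr ((1 - \<gamma>) + 1)" by simp
    also have "\<dots> = h powr (1 - \<gamma>) * h powr 1" by (rule powr_add)
    finally show ?thesis using h by simp
  qed
  have w: "wt \<gamma> r \<rho> i = ((m - 1) powr (2 - \<gamma>) - m powr (2 - \<gamma>)) / (2 - \<gamma>)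
      - (m - real \<rho>) * (((m - 1) powr (1 - \<gamma>) - m powr (1 - \<gamma>)) / (1 - \<gamma>))" for \<rho>
    unfolding wt_def cc_def m_def by simp
  define P2 where "P2 = m powr (2 - \<gamma>)"
  define Q2 where "Q2 = (m - 1) powr (2 - \<gamma>)"
  define P1 where "P1 = m powr (1 - \<gamma>)"
  define Q1 where "Q1 = (m - 1) powr (1 - \<gamma>)"
  define H where "H = h powr (1 - \<gamma>)"
  define D2 where "D2 = 2 - \<gamma>"
  define D1 where "D1 = 1 - \<gamma>"
  have n1: "D2 \<noteq> 0" "D1 \<noteq> 0" "h \<noteq> 0" using g1 h by (auto simp: D1_def D2_def)
  show ?thesis
    unfolding e1 e2 e3 p1 p2 unfolding p3 w
    unfolding P2_def[symmetric] Q2_def[symmetric] P1_def[symmetric] Q1_def[symmetric] H_def[symmetric]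
    unfolding D2_def[symmetric] D1_def[symmetric]
    using n1 by (simp add: field_simps) (simp add: algebra_simps)?
qed



lemma Gamma_2_minus:
  fixes \<gamma> :: real assumes "\<gamma> < 1"
  shows "Gamma (2 - \<gamma>) = (1 - \<gamma>) * Gamma (1 - \<gamma>)"
proof -
  have "1 - \<gamma> \<notin> \<int>\<^sub>\<le>\<^sub>0" using assms nonpos_Ints_nonpos by force
  hence "Gamma ((1 - \<gamma>) + 1) = (1 - \<gamma>) * Gamma (1 - \<gamma>)" by (rule Gamma_plus1)
  thus ?thesis by (simp add: algebra_simps)
qed

lemma core:
  fixes f f1 f2 :: "real \<Rightarrow> real" and \<gamma> h K :: real and r :: nat
  assumes h: "h > 0" and g0: "0 < \<gamma>" and g1: "\<gamma> < 1" and Xle: "real r * h \<le> 1"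
    and d1: "\<And>y. y \<in> {0..1} \<Longrightarrow> (f has_real_derivative f1 y) (at y within {0..1})"
    and d2: "\<And>y. y \<in> {0..1} \<Longrightarrow> (f1 has_real_derivative f2 y) (at y within {0..1})"
    and bd: "\<And>y. y \<in> {0..1} \<Longrightarrow> \<bar>f2 y\<bar> \<le> K"
  shows "\<bar>1 / Gamma (1 - \<gamma>) * integral {0..real r * h} (\<lambda>s. (real r * h - s) powr (- \<gamma>) * f s)
          - h powr (1 - \<gamma>) / Gamma (1 - \<gamma>) * (\<Sum>j = 0..r. ww \<gamma> j r * f (real j * h))\<bar>
         \<le> h\<^sup>2 * K / (8 * Gamma (2 - \<gamma>))"
proof -
  define X where "X = real r * h"
  define a where "a = (\<lambda>i::nat. real i * h)"
  define G where "G = (\<lambda>s. (X - s) powr (- \<gamma>) * f s)"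
  define V where "V = (\<lambda>i. h powr (1 - \<gamma>) * (f (a (Suc i)) * wt \<gamma> r 0 i - f (a i) * wt \<gamma> r 1 i))"
  define g where "g = (\<lambda>i. (X - a i) powr (1 - \<gamma>))"
  define C where "C = K * h^2 / 8"
  have K: "K \<ge> 0" using bd[of 0] by auto
  have "\<forall>i. \<exists>E. i < r \<longrightarrow> (G has_integral (V i + E)) {a i..a (Suc i)} \<and> \<bar>E\<bar> \<le> C * ((g i - g (Suc i)) / (1 - \<gamma>))"
  proof
    fix i
    show "\<exists>E. i < r \<longrightarrow> (G has_integral (V i + E)) {a i..a (Suc i)} \<and> \<bar>E\<bar> \<le> C * ((g i - g (Suc i)) / (1 - \<gamma>))"
    proof (cases "i < r")
      case False thus ?thesis by blast
    next
      case True
      have ab: "a i < a (Suc i)" using h unfolding a_def by simp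
      have bX: "a (Suc i) \<le> X" using True h unfolding a_def X_def by (simp add: mult_right_mono)
      have a0: "0 \<le> a i" using h unfolding a_def by simp
      have sub: "{a i..a (Suc i)} \<subseteq> {0..1}" using bX Xle a0 unfolding X_def by auto
      have "\<exists>E. ((\<lambda>s. (X - s) powr (- \<gamma>) * f s) has_integral
        ((f (a i) - f (a (Suc i))) / (a (Suc i) - a i) * (((X - a i) powr (2 - \<gamma>) - (X - a (Suc i)) powr (2 - \<gamma>)) / (2 - \<gamma>))
         + (f (a (Suc i)) * (X - a i) - f (a i) * (X - a (Suc i))) / (a (Suc i) - a i) * (((X - a i) powr (1 - \<gamma>) - (X - a (Suc i)) powr (1 - \<gamma>)) / (1 - \<gamma>))
         + E)) {a i..a (Suc i)}
       \<and> \<bar>E\<bar> \<le> K * (a (Suc i) - a i)^2 / 8 * (((X - a i) powr (1 - \<gamma>) - (X - a (Suc i)) powr (1 - \<gamma>)) / (1 - \<gamma>))"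
      proof (rule interval_piece[OF g0 g1 ab bX])
        fix y assume y: "y \<in> {a i..a (Suc i)}"
        show "(f has_real_derivative f1 y) (at y within {a i..a (Suc i)})"
          using d1[of y] y sub by (auto intro: has_field_derivative_subset)
        show "(f1 has_real_derivative f2 y) (at y within {a i..a (Suc i)})"
          using d2[of y] y sub by (auto intro: has_field_derivative_subset)
        show "\<bar>f2 y\<bar> \<le> K" using bd[of y] y sub by auto
      qed
      moreover have "a (Suc i) - a i = h" unfolding a_def by (simp add: algebra_simps)
      moreover note piece_value[OF h g0 g1 True, of "f (a i)" "f (a (Suc i))"]
      ultimately show ?thesis
        unfolding G_def V_def g_def C_def a_def X_def by auto
    qed
  qed
  then obtain E where hE: "\<And>i. i < r \<Longrightarrow> (G has_integral (V i + E i)) {a i..a (Suc i)} \<and> \<bar>E i\<bar> \<le> C * ((g i - g (Suc i)) / (1 - \<gamma>))"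
    by metis
  have chain: "(G has_integral (\<Sum>i<r. V i + E i)) {a 0..a r}"
    using has_integral_chain[of r a G "\<lambda>i. V i + E i"] hE h unfolding a_def by auto
  hence intG: "integral {0..X} G = (\<Sum>i<r. V i) + (\<Sum>i<r. E i)"
    unfolding a_def X_def by (simp add: integral_unique sum.distrib)
  have sV: "(\<Sum>i<r. V i) = h powr (1 - \<gamma>) * (\<Sum>j = 0..r. ww \<gamma> j r * f (real j * h))"
    unfolding V_def sum_ww[of \<gamma> r "\<lambda>j. f (real j * h)"] a_def by (simp add: sum_distrib_left algebra_simps)
  have "\<bar>\<Sum>i<r. E i\<bar> \<le> (\<Sum>i<r. \<bar>E i\<bar>)" by (rule sum_abs)
  also have "\<dots> \<le> (\<Sum>i<r. C * ((g i - g (Suc i)) / (1 - \<gamma>)))" using hE by (intro sum_mono) auto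
  also have "\<dots> = C / (1 - \<gamma>) * (\<Sum>i<r. g i - g (Suc i))"
    by (simp add: sum_distrib_left sum_divide_distrib)
  also have "\<dots> = C / (1 - \<gamma>) * (g 0 - g r)" by (simp add: sum_lessThan_telescope')
  also have "g r = 0" unfolding g_def a_def X_def by simp
  also have "g 0 \<le> 1" unfolding g_def a_def X_def using Xle h g1
    by (intro powr_le1) (auto simp: zero_le_mult_iff)
  hence "C / (1 - \<gamma>) * (g 0 - 0) \<le> C / (1 - \<gamma>) * 1"
    using K g1 unfolding C_def by (intro mult_left_mono) auto
  finally have sE: "\<bar>\<Sum>i<r. E i\<bar> \<le> C / (1 - \<gamma>)" by simp
  have gpos: "Gamma (1 - \<gamma>) > 0" using g1 by (intro Gamma_real_pos) simp
  have "1 / Gamma (1 - \<gamma>) * integral {0..X} G - h powr (1 - \<gamma>) / Gamma (1 - \<gamma>) * (\<Sum>j = 0..r. ww \<gamma> j r * f (real j * h))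
      = (\<Sum>i<r. E i) / Gamma (1 - \<gamma>)"
    unfolding intG sV by (simp add: field_simps add_divide_distrib)
  hence "\<bar>1 / Gamma (1 - \<gamma>) * integral {0..X} G - h powr (1 - \<gamma>) / Gamma (1 - \<gamma>) * (\<Sum>j = 0..r. ww \<gamma> j r * f (real j * h))\<bar>
      \<le> C / (1 - \<gamma>) / Gamma (1 - \<gamma>)"
  proof -
    have "\<bar>(\<Sum>i<r. E i) / Gamma (1 - \<gamma>)\<bar> = \<bar>\<Sum>i<r. E i\<bar> / Gamma (1 - \<gamma>)" using gpos by simp
    also have "\<dots> \<le> C / (1 - \<gamma>) / Gamma (1 - \<gamma>)" using sE gpos by (intro divide_right_mono) auto
    finally show ?thesis using \<open>_ = (\<Sum>i<r. E i) / Gamma (1 - \<gamma>)\<close> by simp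
  qed
  also have "\<dots> = h\<^sup>2 * K / (8 * Gamma (2 - \<gamma>))"
    unfolding Gamma_2_minus[OF g1] C_def by (simp add: field_simps)
  finally show ?thesis unfolding G_def X_def .
qed


theorem theorem5p2:
  fixes T \<gamma> :: real and M N k :: nat
    and u u1 u2 u3 :: "real \<Rightarrow> real \<Rightarrow> real"
  assumes "T > 0" and "M > 0" and "N > 0"
    and "0 < \<gamma>" and "\<gamma> < 1" and "k \<le> M - 1"
    and d1: "\<And>x t. x \<in> {0..1} \<Longrightarrow> t \<in> {0..T} \<Longrightarrow>
              ((\<lambda>y. u y t) has_real_derivative u1 x t) (at x within {0..1})"
    and d2: "\<And>x t. x \<in> {0..1} \<Longrightarrow> t \<in> {0..T} \<Longrightarrow>
              ((\<lambda>y. u1 y t) has_real_derivative u2 x t) (at x within {0..1})"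
    and d3: "\<And>x t. x \<in> {0..1} \<Longrightarrow> t \<in> {0..T} \<Longrightarrow>
              ((\<lambda>y. u2 y t) has_real_derivative u3 x t) (at x within {0..1})"
    and cont: "continuous_on ({0..1} \<times> {0..T}) (\<lambda>(x, t). u3 x t)"
  shows "let \<tau> = T / real M; h = 1 / real N;
             t = (\<lambda>i::nat. real i * \<tau>); x = (\<lambda>i::nat. real i * h);
             \<nu> = h powr (1 - \<gamma>) / Gamma (1 - \<gamma>);
             Mbar = Sup {\<bar>u3 y s\<bar> | y s. y \<in> {0..1} \<and> s \<in> {0..T}};
             R = (\<lambda>r. caputo \<gamma> (\<lambda>y. u1 y (t (k + 1))) (x r)
                      - \<nu> * (\<Sum>j = 0..r. ww \<gamma> j r * u1 (x j) (t (k + 1))))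
         in \<forall>r \<in> {1..N - 1}. \<bar>R r\<bar> \<le> h\<^sup>2 * Mbar / (8 * Gamma (2 - \<gamma>))"
proof -
  define h where "h = 1 / real N"
  define t0 where "t0 = real (k + 1) * (T / real M)"
  define Mbar where "Mbar = Sup {\<bar>u3 y s\<bar> | y s. y \<in> {0..1} \<and> s \<in> {0..T}}"
  have h: "h > 0" using assms(3) unfolding h_def by simp
  have t0: "t0 \<in> {0..T}"
  proof -
    have "real (k + 1) \<le> real M" using assms(2,6) by linarith
    hence "real (k + 1) * (T / real M) \<le> real M * (T / real M)"
      using assms(1,2) by (intro mult_right_mono) auto
    thus ?thesis unfolding t0_def using assms(1,2) by auto
  qed
  have "compact ((\<lambda>(x, t). u3 x t) ` ({0..1} \<times> {0..T}))"
    by (rule compact_continuous_image[OF cont]) (simp add: compact_Times)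
  hence "bounded ((\<lambda>(x, t). u3 x t) ` ({0..1} \<times> {0..T}))" by (rule compact_imp_bounded)
  then obtain B where B: "\<And>z. z \<in> (\<lambda>(x, t). u3 x t) ` ({0..1} \<times> {0..T}) \<Longrightarrow> norm z \<le> B"
    unfolding bounded_iff by blast
  have bdd: "bdd_above {\<bar>u3 y s\<bar> | y s. y \<in> {0..1} \<and> s \<in> {0..T}}"
  proof (rule bdd_aboveI[of _ B])
    fix z assume "z \<in> {\<bar>u3 y s\<bar> | y s. y \<in> {0..1} \<and> s \<in> {0..T}}"
    then obtain y s where "z = \<bar>u3 y s\<bar>" "y \<in> {0..1}" "s \<in> {0..T}" by blast
    thus "z \<le> B" using B[of "u3 y s"] by force
  qed
  have bd: "\<bar>u3 y t0\<bar> \<le> Mbar" if "y \<in> {0..1}" for y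
    unfolding Mbar_def by (rule cSup_upper[OF _ bdd]) (use that t0 in blast)
  show ?thesis unfolding Let_def caputo_def h_def[symmetric] t0_def[symmetric] Mbar_def[symmetric]
  proof (intro ballI)
    fix r assume r: "r \<in> {1..N - 1}"
    have "real r * h \<le> 1" using r assms(3) unfolding h_def by (auto simp: field_simps)
    from core[OF h assms(4,5) this, of "\<lambda>y. u1 y t0" "\<lambda>y. u2 y t0" "\<lambda>y. u3 y t0" Mbar]
    show "\<bar>1 / Gamma (1 - \<gamma>) * integral {0..real r * h} (\<lambda>s. (real r * h - s) powr - \<gamma> * u1 s t0) -
           h powr (1 - \<gamma>) / Gamma (1 - \<gamma>) * (\<Sum>j = 0..r. ww \<gamma> j r * u1 (real j * h) t0)\<bar>
          \<le> h\<^sup>2 * Mbar / (8 * Gamma (2 - \<gamma>))"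
      using d2 d3 t0 bd by blast
  qed
qed

end
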